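(* Let $\phi_1,\phi_2\in D=\{z\in\mathbb{C};|z|<1\}$ and let $Z$ be a random variable on the unit circle $\partial D$ with density, with respect to arc length, $$f(z)=\frac{1}{2\pi}\frac{|1-\phi_1\overline{\phi_2}|^2}{1-|\phi_1\overline{\phi_2}|^2}\frac{1-|\phi_1|^2}{|z-\phi_1|^2}\frac{1-|\phi_2|^2}{|z-\phi_2|^2}.$$ Then the skewness $s$ of $Z$ is $$s=\frac{|1-\phi_1\overline{\phi_2}|^2}{(1-|\phi_1\overline{\phi_2}|^2)^3}\rho^{-2}(1-\rho)^{-3/2}\operatorname{Im}(\phi_1\overline{\phi_2})(|\phi_1|^2-|\phi_2|^2)(1-|\phi_1|^2)(1-|\phi_2|^2),$$ where $\rho=|(1-|\phi_2|^2)\phi_1+(1-|\phi_1|^2)\phi_2|/(1-|\phi_1\overline{\phi_2}|^2)$.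
   Context: For a random variable $Z$ on the unit circle with $E(Z)\neq 0$, the mean direction is $\zeta=\arg\{E(Z)\}$, the mean resultant length is $\delta=|E(Z)|$, and the (Mardia) skewness is $s=E[\operatorname{Im}\{(Z\mathrm{e}^{-\mathrm{i}\zeta})^2\}]/(1-\delta)^{3/2}$. *)

theory Defs
  imports "HOL-Analysis.Analysis"
begin

text \<open>A random variable Z on the unit circle with density f (w.r.t. arc length):
  the expectation of g(Z) is the integral of g(e^{it}) f(e^{it}) over t in [0, 2 pi].\<close>
definition circ_expect :: "(complex \<Rightarrow> real) \<Rightarrow> (complex \<Rightarrow> complex) \<Rightarrow> complex" where
  "circ_expect f g = integral {0..2*pi} (\<lambda>t. of_real (f (cis t)) * g (cis t))"

definition circ_mean :: "(complex \<Rightarrow> real) \<Rightarrow> complex" where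
  "circ_mean f = circ_expect f (\<lambda>z. z)"

definition mean_direction :: "(complex \<Rightarrow> real) \<Rightarrow> real" where
  "mean_direction f = Arg (circ_mean f)"

definition mean_resultant_length :: "(complex \<Rightarrow> real) \<Rightarrow> real" where
  "mean_resultant_length f = cmod (circ_mean f)"

text \<open>Mardia skewness s = E[Im((Z e^{-i zeta})^2)] / (1 - delta)^{3/2}\<close>
definition circ_skewness :: "(complex \<Rightarrow> real) \<Rightarrow> real" where
  "circ_skewness f =
     Re (circ_expect f (\<lambda>z. of_real (Im ((z * cis (- mean_direction f))\<^sup>2))))
     / (1 - mean_resultant_length f) powr (3/2)"

definition pc_density :: "complex \<Rightarrow> complex \<Rightarrow> complex \<Rightarrow> real" where
  "pc_density \<phi>1 \<phi>2 z =
     1 / (2*pi) * ((cmod (1 - \<phi>1 * cnj \<phi>2))\<^sup>2 / (1 - (cmod (\<phi>1 * cnj \<phi>2))\<^sup>2))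
     * ((1 - (cmod \<phi>1)\<^sup>2) / (cmod (z - \<phi>1))\<^sup>2)
     * ((1 - (cmod \<phi>2)\<^sup>2) / (cmod (z - \<phi>2))\<^sup>2)"

end

theory Submission
  imports Defs "HOL-Complex_Analysis.Complex_Analysis"
begin


lemma two_pole_ne:
  fixes F :: "complex \<Rightarrow> complex"
  assumes cont: "continuous_on (cball 0 1) F" and hol: "F holomorphic_on ball 0 1"
    and a: "cmod a < 1" and b: "cmod b < 1" and ab: "a \<noteq> b"
  shows "((\<lambda>z. F z / ((z - a) * (z - b))) has_contour_integral
           (2 * of_real pi * \<i> * ((F a - F b) / (a - b)))) (circlepath 0 1)"
proof -
  have 1: "((\<lambda>u. F u/(u-a)) has_contour_integral (2 * of_real pi * \<i> * F a)) (circlepath 0 1)"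
    by (rule Cauchy_integral_circlepath[OF cont hol]) (use a in simp)
  have 2: "((\<lambda>u. F u/(u-b)) has_contour_integral (2 * of_real pi * \<i> * F b)) (circlepath 0 1)"
    by (rule Cauchy_integral_circlepath[OF cont hol]) (use b in simp)
  have 3: "((\<lambda>u. (F u/(u-a) - F u/(u-b)) / (a - b)) has_contour_integral
     ((2 * of_real pi * \<i> * F a - 2 * of_real pi * \<i> * F b) / (a - b))) (circlepath 0 1)"
    by (intro has_contour_integral_div has_contour_integral_diff 1 2)
  have 4: "((\<lambda>u. (F u/(u-a) - F u/(u-b)) / (a - b)) has_contour_integral
     (2 * of_real pi * \<i> * ((F a - F b) / (a - b)))) (circlepath 0 1)"
    using 3 by (simp add: right_diff_distrib[symmetric] mult.assoc)
  show ?thesis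
  proof (rule has_contour_integral_eq[OF 4])
    fix z assume "z \<in> path_image (circlepath 0 1)"
    hence z: "cmod z = 1" by (simp add: path_image_circlepath)
    have "z \<noteq> a" "z \<noteq> b" using z a b by auto
    thus "(F z/(z-a) - F z/(z-b)) / (a - b) = F z / ((z - a) * (z - b))"
    proof -
      have "z - a \<noteq> 0" "z - b \<noteq> 0" "a - b \<noteq> 0" using \<open>z\<noteq>a\<close> \<open>z\<noteq>b\<close> ab by auto
      thus ?thesis by (simp add: divide_simps) (simp add: algebra_simps)
    qed
  qed
qed

lemma two_pole_eq:
  fixes F :: "complex \<Rightarrow> complex"
  assumes cont: "continuous_on (cball 0 1) F" and hol: "F holomorphic_on ball 0 1"
    and a: "cmod a < 1"
  shows "((\<lambda>z. F z / ((z - a) * (z - a))) has_contour_integral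
           (2 * of_real pi * \<i> * deriv F a)) (circlepath 0 1)"
  using Cauchy_has_contour_integral_higher_derivative_circlepath[OF cont hol, of a 1] a
  by (simp add: power2_eq_square)



lemma density_eq:
  assumes a: "cmod a < 1" and b: "cmod b < 1" and z: "cmod z = 1"
  shows "of_real (pc_density a b z) * z ^ k =
    ((1 - a*cnj b)*(1 - cnj a * b)/(1 - a*cnj a*(b*cnj b)) * (1 - a*cnj a)*(1 - b*cnj b)) / (2 * of_real pi * \<i>)
      * (z^(k+1) / ((1 - cnj a * z)*(1 - cnj b * z)) / ((z - a) * (z - b))) * 1 * \<i> * z"
proof -
  have cz: "cnj z = 1 / z" using z by (metis complex_div_cnj divide_self_if mult.commute nonzero_mult_div_cancel_left norm_zero zero_neq_one complex_norm_square power_one of_real_1)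
  have z0: "z \<noteq> 0" using z by auto
  have za: "z - a \<noteq> 0" "z - b \<noteq> 0" using z a b by auto
  have "cmod (cnj a * z) < 1" "cmod (cnj b * z) < 1" using a b z by (simp_all add: norm_mult)
  hence da: "1 - cnj a * z \<noteq> 0" "1 - cnj b * z \<noteq> 0" by (metis eq_iff_diff_eq_0 norm_one order.irrefl)+
  have "cmod a * cmod b < 1" using a b by (metis mult_strict_mono' norm_ge_zero mult_1_right)
  hence "(cmod a * cmod b)^2 < 1" by (simp add: power_less_one_iff)
  hence "1 - of_real ((cmod a * cmod b)^2) \<noteq> (0::complex)" by (metis eq_iff_diff_eq_0 of_real_1 of_real_eq_iff less_irrefl)
  moreover have "of_real ((cmod a * cmod b)^2) = a*cnj a*(b*cnj b)"
    by (simp add: power_mult_distrib complex_norm_square[symmetric])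
  ultimately have dab: "1 - a*cnj a*(b*cnj b) \<noteq> 0" by simp
  have pi0: "complex_of_real pi \<noteq> 0" by simp
  have e1: "complex_of_real ((cmod (z - a))\<^sup>2) = (z - a) * (1 - cnj a * z) / z"
  proof -
    have "complex_of_real ((cmod (z - a))\<^sup>2) = (z - a) * cnj (z - a)"
      by (rule complex_norm_square)
    also have "\<dots> = (z - a) * (1 - cnj a * z) / z" using z0 by (simp add: cz field_simps)
    finally show ?thesis .
  qed
  have e2: "complex_of_real ((cmod (z - b))\<^sup>2) = (z - b) * (1 - cnj b * z) / z"
  proof -
    have "complex_of_real ((cmod (z - b))\<^sup>2) = (z - b) * cnj (z - b)"
      by (rule complex_norm_square)
    also have "\<dots> = (z - b) * (1 - cnj b * z) / z" using z0 by (simp add: cz field_simps)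
    finally show ?thesis .
  qed
  have e3: "\<And>w. complex_of_real ((cmod w)\<^sup>2) = w * cnj w" by (rule complex_norm_square)
  show ?thesis
    unfolding pc_density_def
    apply (simp only: of_real_mult of_real_divide of_real_diff of_real_1 e1 e2)
    apply (simp only: e3 complex_cnj_diff complex_cnj_one complex_cnj_mult complex_cnj_cnj)
    using z0 za da dab pi0 apply (simp add: divide_simps)
    using dab by (simp add: mult_ac)
qed

definition Qc :: "complex \<Rightarrow> complex \<Rightarrow> complex" where
  "Qc a b = ((1 - a*cnj b)*(1 - cnj a * b)/(1 - a*cnj a*(b*cnj b)) * (1 - a*cnj a)*(1 - b*cnj b))"

definition Fk :: "nat \<Rightarrow> complex \<Rightarrow> complex \<Rightarrow> complex \<Rightarrow> complex" where
  "Fk k a b z = z^(k+1) / ((1 - cnj a * z)*(1 - cnj b * z))"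

definition Dk :: "nat \<Rightarrow> complex \<Rightarrow> complex \<Rightarrow> complex" where
  "Dk k a b = (if a = b then deriv (Fk k a b) a else (Fk k a b a - Fk k a b b) / (a - b))"

lemma Fk_hol:
  assumes a: "cmod a < 1" and b: "cmod b < 1"
  shows "Fk k a b holomorphic_on ball 0 1" "continuous_on (cball 0 1) (Fk k a b)"
proof -
  have nz: "(1 - cnj a * z) * (1 - cnj b * z) \<noteq> 0" if "cmod z \<le> 1" for z
  proof -
    have "cmod (cnj a * z) < 1" "cmod (cnj b * z) < 1"
      using a b that by (simp_all add: norm_mult mult_le_one mult_less_le_imp_less mult_strict_mono' le_less_trans[OF mult_left_le])
    thus ?thesis by (metis eq_iff_diff_eq_0 mult_eq_0_iff norm_one less_irrefl)
  qed
  show "Fk k a b holomorphic_on ball 0 1" unfolding Fk_def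
    by (intro holomorphic_intros) (use nz in auto)
  show "continuous_on (cball 0 1) (Fk k a b)" unfolding Fk_def
    by (intro continuous_intros) (use nz in auto)
qed

lemma moment:
  assumes a: "cmod a < 1" and b: "cmod b < 1"
  shows "((\<lambda>t. of_real (pc_density a b (cis t)) * (cis t)^k) has_integral (Qc a b * Dk k a b)) {0..2*pi}"
proof -
  have H: "((\<lambda>z. Fk k a b z / ((z - a) * (z - b))) has_contour_integral
           (2 * of_real pi * \<i> * Dk k a b)) (circlepath 0 1)"
  proof (cases "a = b")
    case True thus ?thesis using two_pole_eq[OF Fk_hol(2)[OF a b] Fk_hol(1)[OF a b] a] by (simp add: Dk_def)
  next
    case False thus ?thesis using two_pole_ne[OF Fk_hol(2)[OF a b] Fk_hol(1)[OF a b] a b] by (simp add: Dk_def)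
  qed
  have H2: "((\<lambda>z. Qc a b / (2 * of_real pi * \<i>) * (Fk k a b z / ((z - a) * (z - b)))) has_contour_integral
           (Qc a b * Dk k a b)) (circlepath 0 1)"
  proof -
    have e: "Qc a b / (2 * of_real pi * \<i>) * (2 * of_real pi * \<i> * Dk k a b) = Qc a b * Dk k a b"
      by (simp add: field_simps)
    show ?thesis using has_contour_integral_lmul[OF H, of "Qc a b / (2 * of_real pi * \<i>)"] unfolding e .
  qed
  have H3: "((\<lambda>t. Qc a b / (2 * of_real pi * \<i>) * (Fk k a b (cis t) / ((cis t - a) * (cis t - b))) * 1 * \<i> * cis t)
      has_integral (Qc a b * Dk k a b)) {0..2*pi}"
    using H2 unfolding circlepath_def
    by (subst (asm) has_contour_integral_part_circlepath_iff) auto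
  show ?thesis
    apply (rule has_integral_eq[OF _ H3])
    using density_eq[OF a b, of "cis _" k] by (simp add: Qc_def Fk_def)
qed



lemma nz_basic:
  assumes a: "cmod a < 1" and b: "cmod b < 1"
  shows "1 - cnj a * b \<noteq> 0" "1 - a * cnj b \<noteq> 0" "1 - a * cnj a \<noteq> 0" "1 - b * cnj b \<noteq> 0"
    "1 - cnj a * a \<noteq> 0" "1 - cnj b * b \<noteq> 0" "1 - a*cnj a*(b*cnj b) \<noteq> 0"
proof -
  have m: "cmod (x * y) < 1" if "cmod x < 1" "cmod y < 1" for x y :: complex
    using that by (simp add: norm_mult) (metis mult_strict_mono' norm_ge_zero mult_1_right)
  have n: "1 - w \<noteq> 0" if "cmod w < 1" for w :: complex using that by auto
  have ca: "cmod (cnj a) < 1" and cb: "cmod (cnj b) < 1" using a b by auto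
  show "1 - cnj a * b \<noteq> 0" using n[OF m[OF ca b]] .
  show "1 - a * cnj b \<noteq> 0" using n[OF m[OF a cb]] .
  show "1 - a * cnj a \<noteq> 0" using n[OF m[OF a ca]] .
  show "1 - b * cnj b \<noteq> 0" using n[OF m[OF b cb]] .
  show "1 - cnj a * a \<noteq> 0" using n[OF m[OF ca a]] .
  show "1 - cnj b * b \<noteq> 0" using n[OF m[OF cb b]] .
  show "1 - a*cnj a*(b*cnj b) \<noteq> 0" using n[OF m[OF m[OF a ca] m[OF b cb]]] .
qed

lemma derivF:
  fixes c a :: complex and n :: nat
  assumes h: "1 - c * a \<noteq> 0"
  shows "((\<lambda>z. z^(n+1) / ((1 - c*z)*(1 - c*z))) has_field_derivative
     (of_nat (n+1) * a^n * (1 - c*a) + 2*c*a^(n+1)) / (1 - c*a)^3) (at a)"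
proof -
  have d1: "((\<lambda>z. z^(n+1)) has_field_derivative of_nat (n+1) * a^n) (at a)"
    using DERIV_power[OF DERIV_ident, of "n+1" a UNIV] by simp
  have d2: "((\<lambda>z. (1 - c*z)*(1 - c*z)) has_field_derivative (- 2*c*(1 - c*a))) (at a)"
    by (rule DERIV_cong, (rule derivative_intros)+) (simp add: algebra_simps)
  show ?thesis
    apply (rule DERIV_cong[OF DERIV_divide[OF d1 d2]])
    using h by (simp_all add: divide_simps) (simp add: algebra_simps power2_eq_square power3_eq_cube)
qed

lemma deriv1: "1 - cnj a * a \<noteq> 0 \<Longrightarrow> deriv (Fk 1 a a) a = 2*a/(1 - cnj a*a)^3"
proof -
  assume h: "1 - cnj a * a \<noteq> 0"
  have "(Fk 1 a a has_field_derivative 2*a/(1 - cnj a*a)^3) (at a)"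
    unfolding Fk_def using derivF[OF h, of 1] h
    by (simp add: divide_simps algebra_simps power2_eq_square power3_eq_cube)
  thus ?thesis by (rule DERIV_imp_deriv)
qed

lemma deriv2: "1 - cnj a * a \<noteq> 0 \<Longrightarrow> deriv (Fk 2 a a) a = a^2*(3 - cnj a * a)/(1 - cnj a*a)^3"
proof -
  assume h: "1 - cnj a * a \<noteq> 0"
  have "(Fk 2 a a has_field_derivative a^2*(3 - cnj a * a)/(1 - cnj a*a)^3) (at a)"
    unfolding Fk_def using derivF[OF h, of 2] h
    by (simp add: divide_simps algebra_simps power2_eq_square power3_eq_cube)
  thus ?thesis by (rule DERIV_imp_deriv)
qed



lemma m_closed:
  assumes a: "cmod a < 1" and b: "cmod b < 1"
  shows "Qc a b * Dk 1 a b = ((1 - b*cnj b)*a + (1 - a*cnj a)*b)/(1 - a*cnj a*(b*cnj b))"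
    "Qc a b * Dk 2 a b = (a^2 + a*b + b^2 - (a+b)*(b*cnj b*a + a*cnj a*b) + a*cnj a*(b*cnj b)*a*b)/(1 - a*cnj a*(b*cnj b))"
proof -
  note nz = nz_basic[OF a b]
  have nz2: "1 - cnj b * a \<noteq> 0" "1 - cnj a * b \<noteq> 0" using nz by (simp_all add: mult.commute)
  have "Qc a b * Dk 1 a b = ((1 - b*cnj b)*a + (1 - a*cnj a)*b)/(1 - a*cnj a*(b*cnj b)) \<and>
    Qc a b * Dk 2 a b = (a^2 + a*b + b^2 - (a+b)*(b*cnj b*a + a*cnj a*b) + a*cnj a*(b*cnj b)*a*b)/(1 - a*cnj a*(b*cnj b))"
  proof (cases "a = b")
    case True
    have d1: "deriv (Fk 1 b b) b = 2*b/(1 - cnj b*b)^3" by (rule deriv1) (use nz in simp)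
    have d2: "deriv (Fk 2 b b) b = b^2*(3 - cnj b * b)/(1 - cnj b*b)^3" by (rule deriv2) (use nz in simp)
    show ?thesis using nz unfolding True Dk_def
      apply (simp only: if_True d1 d2)
      by (simp add: Qc_def divide_simps) (simp add: algebra_simps power2_eq_square power3_eq_cube)
  next
    case False
    hence ab: "a - b \<noteq> 0" by simp
    show ?thesis using nz nz2 ab unfolding Dk_def Fk_def Qc_def
      by (simp add: False divide_simps) (simp add: algebra_simps power2_eq_square power3_eq_cube)
  qed
  thus "Qc a b * Dk 1 a b = ((1 - b*cnj b)*a + (1 - a*cnj a)*b)/(1 - a*cnj a*(b*cnj b))"
    "Qc a b * Dk 2 a b = (a^2 + a*b + b^2 - (a+b)*(b*cnj b*a + a*cnj a*b) + a*cnj a*(b*cnj b)*a*b)/(1 - a*cnj a*(b*cnj b))"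
    by auto
qed



lemma poly_id:
  fixes a b ca cb :: complex
  shows "((1 - b*cb)*ca + (1 - a*ca)*cb)^2 * (a^2 + a*b + b^2 - (a+b)*(b*cb*a + a*ca*b) + a*ca*(b*cb)*a*b)
       - ((1 - b*cb)*a + (1 - a*ca)*b)^2 * (ca^2 + ca*cb + cb^2 - (ca+cb)*(b*cb*ca + a*ca*cb) + a*ca*(b*cb)*ca*cb)
       = (1 - a*cb)*(1 - ca*b)*(a*cb - ca*b)*(a*ca - b*cb)*(1 - a*ca)*(1 - b*cb)"
  by (simp add: algebra_simps power2_eq_square)

lemma rearr:
  fixes C I D E F L3 r2 P :: real
  shows "C * I * D * E * F / (L3 * r2) * P = C / L3 * (1 / r2) * P * I * D * E * F"
  by (simp add: field_simps)

theorem corollary2: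
  fixes \<phi>1 \<phi>2 :: complex and \<rho> :: real
  assumes "cmod \<phi>1 < 1" and "cmod \<phi>2 < 1"
    and "circ_mean (pc_density \<phi>1 \<phi>2) \<noteq> 0"
    and "\<rho> = cmod (of_real (1 - (cmod \<phi>2)\<^sup>2) * \<phi>1 + of_real (1 - (cmod \<phi>1)\<^sup>2) * \<phi>2)
               / (1 - (cmod (\<phi>1 * cnj \<phi>2))\<^sup>2)"
  shows "circ_skewness (pc_density \<phi>1 \<phi>2) =
           (cmod (1 - \<phi>1 * cnj \<phi>2))\<^sup>2 / (1 - (cmod (\<phi>1 * cnj \<phi>2))\<^sup>2) ^ 3
           * (1 / \<rho>\<^sup>2) * (1 - \<rho>) powr (-3/2)
           * Im (\<phi>1 * cnj \<phi>2) * ((cmod \<phi>1)\<^sup>2 - (cmod \<phi>2)\<^sup>2)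
           * (1 - (cmod \<phi>1)\<^sup>2) * (1 - (cmod \<phi>2)\<^sup>2)"
proof -
  note a = assms(1) and b = assms(2)
  define f where "f = pc_density \<phi>1 \<phi>2"
  define L where "L = 1 - (cmod (\<phi>1 * cnj \<phi>2))\<^sup>2"
  define M1 where "M1 = (1 - \<phi>2*cnj \<phi>2)*\<phi>1 + (1 - \<phi>1*cnj \<phi>1)*\<phi>2"
  define M2 where "M2 = \<phi>1^2 + \<phi>1*\<phi>2 + \<phi>2^2 - (\<phi>1+\<phi>2)*(\<phi>2*cnj \<phi>2*\<phi>1 + \<phi>1*cnj \<phi>1*\<phi>2)
      + \<phi>1*cnj \<phi>1*(\<phi>2*cnj \<phi>2)*\<phi>1*\<phi>2"
  have sq: "\<And>x. complex_of_real ((cmod x)\<^sup>2) = x * cnj x" by (rule complex_norm_square)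
  have Lc: "1 - \<phi>1*cnj \<phi>1*(\<phi>2*cnj \<phi>2) = of_real L"
    unfolding L_def of_real_diff of_real_1 sq by (simp add: mult_ac)
  have "cmod (\<phi>1 * cnj \<phi>2) < 1" using a b
    by (simp add: norm_mult) (metis mult_strict_mono' norm_ge_zero mult_1_right)
  hence "(cmod (\<phi>1 * cnj \<phi>2))\<^sup>2 < 1" by (simp add: power_less_one_iff)
  hence Lpos: "L > 0" unfolding L_def by simp
  have m1: "circ_mean f = M1 / of_real L"
  proof -
    have "integral {0..2*pi} (\<lambda>t. of_real (f (cis t)) * (cis t)^1) = Qc \<phi>1 \<phi>2 * Dk 1 \<phi>1 \<phi>2"
      unfolding f_def by (rule integral_unique[OF moment[OF a b]])
    thus ?thesis unfolding circ_mean_def circ_expect_def m_closed(1)[OF a b] Lc M1_def by simp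
  qed
  have E2: "((\<lambda>t. of_real (f (cis t)) * (cis t)^2) has_integral M2 / of_real L) {0..2*pi}"
    using moment[OF a b, of 2] unfolding f_def m_closed(2)[OF a b] Lc M2_def .
  define m where "m = circ_mean f"
  have m0: "m \<noteq> 0" using assms(3) unfolding m_def f_def .
  have c1: "1 - \<phi>2*cnj \<phi>2 = complex_of_real (1 - (cmod \<phi>2)\<^sup>2)"
       "1 - \<phi>1*cnj \<phi>1 = complex_of_real (1 - (cmod \<phi>1)\<^sup>2)"
    unfolding of_real_diff of_real_1 sq by simp_all
  have rho: "\<rho> = cmod m"
    unfolding assms(4) m_def m1 M1_def c1 L_def[symmetric] using Lpos
    by (simp add: norm_divide)
  have rho0: "\<rho> > 0" using rho m0 by simp
  define w where "w = cis (- mean_direction f)"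
  have w: "w = cnj m / of_real \<rho>"
    unfolding w_def mean_direction_def m_def[symmetric] rho
    using m0 by (simp add: cis_cnj[symmetric] cis_Arg sgn_eq)
  have num: "circ_expect f (\<lambda>z. of_real (Im ((z * w)\<^sup>2))) = of_real (Im (M2 / of_real L * w\<^sup>2))"
  proof -
    have "((\<lambda>t. of_real (f (cis t)) * (cis t)^2 * w\<^sup>2) has_integral M2 / of_real L * w\<^sup>2) {0..2*pi}"
      by (rule has_integral_mult_left[OF E2])
    from has_integral_of_real[OF has_integral_linear[OF this bounded_linear_Im]]
    have "((\<lambda>t. complex_of_real (Im (of_real (f (cis t)) * (cis t)^2 * w\<^sup>2))) has_integral
       of_real (Im (M2 / of_real L * w\<^sup>2))) {0..2*pi}" by (simp only: o_def)
    moreover have "\<And>t. complex_of_real (Im (of_real (f (cis t)) * (cis t)^2 * w\<^sup>2)) =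
       of_real (f (cis t)) * of_real (Im ((cis t * w)\<^sup>2))"
      by (simp add: power_mult_distrib mult.assoc)
    ultimately show ?thesis unfolding circ_expect_def by (simp add: integral_unique)
  qed
  have key: "Im (cnj M1 ^ 2 * M2) = (cmod (1 - \<phi>1 * cnj \<phi>2))\<^sup>2 * Im (\<phi>1 * cnj \<phi>2) *
      ((cmod \<phi>1)\<^sup>2 - (cmod \<phi>2)\<^sup>2) * (1 - (cmod \<phi>1)\<^sup>2) * (1 - (cmod \<phi>2)\<^sup>2)"
  proof -
    have im: "complex_of_real (Im z) = (z - cnj z) / (2 * \<i>)" for z
    proof -
      have "z - cnj z = complex_of_real (Im z) * (2 * \<i>)" by (simp add: complex_diff_cnj mult_ac)
      moreover have "(2 * \<i>) \<noteq> (0::complex)" by simp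
      ultimately show ?thesis by (metis nonzero_mult_div_cancel_right)
    qed
    have "complex_of_real (Im (cnj M1 ^ 2 * M2)) = complex_of_real ((cmod (1 - \<phi>1 * cnj \<phi>2))\<^sup>2 * Im (\<phi>1 * cnj \<phi>2) *
      ((cmod \<phi>1)\<^sup>2 - (cmod \<phi>2)\<^sup>2) * (1 - (cmod \<phi>1)\<^sup>2) * (1 - (cmod \<phi>2)\<^sup>2))"
      unfolding of_real_mult of_real_diff of_real_1 sq im
      using poly_id[of \<phi>2 "cnj \<phi>2" "cnj \<phi>1" \<phi>1]
      unfolding M1_def M2_def
      by (simp add: field_simps)
    thus ?thesis using of_real_eq_iff by blast
  qed
  have imw: "Im (M2 / of_real L * w\<^sup>2) = Im (cnj M1 ^ 2 * M2) / (L^3 * \<rho>^2)"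
  proof -
    have "M2 / of_real L * w\<^sup>2 = (cnj M1 ^ 2 * M2) / of_real (L^3 * \<rho>^2)"
      unfolding w m_def m1 using Lpos rho0 by (simp add: field_simps) (simp add: power3_eq_cube power2_eq_square)
    thus ?thesis by (simp add: Im_divide_of_real)
  qed
  have "circ_skewness f = Im (cnj M1 ^ 2 * M2) / (L^3 * \<rho>^2) / (1 - \<rho>) powr (3/2)"
    unfolding circ_skewness_def w_def[symmetric] num imw mean_resultant_length_def m_def[symmetric] rho[symmetric]
    by simp
  also have "\<dots> = Im (cnj M1 ^ 2 * M2) / (L^3 * \<rho>^2) * (1 - \<rho>) powr (-3/2)"
  proof -
    have "(1 - \<rho>) powr (-3/2) = inverse ((1 - \<rho>) powr (3/2))"
      using powr_minus[of "1 - \<rho>" "3/2"] by simp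
    thus ?thesis by (simp only: divide_inverse)
  qed
  finally show ?thesis unfolding f_def[symmetric] key L_def[symmetric]
    by (simp only: rearr)
qed

end
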